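(* Let $d>K\ge1$, $\mathbf Q\in\mathrm{St}(d,K)$, $\lambda_1>\dots>\lambda_K>0$, $\boldsymbol\Theta=\mathrm{diag}(\sqrt{\lambda_1},\dots,\sqrt{\lambda_K})$, $a_1>\dots>a_K>0$, $\alpha>0$, and $\mathcal A_\alpha(\mathbf X)=\alpha\mathbf X+\mathbf Q\boldsymbol\Theta^2\mathbf Q^\top\mathbf X\,\mathrm{diag}(a_1,\dots,a_K)$. A point $\mathbf X\in\mathrm{St}(d,K)$ is a fixed point of the iteration $\mathbf X^{t+1}\in\mathcal P_{\mathrm{St}}(\mathcal A_\alpha(\mathbf X^t))$ (i.e., $\mathbf X\in\mathcal P_{\mathrm{St}}(\mathcal A_\alpha(\mathbf X))$) if and only if $\mathrm{tr}(\mathbf X^\top\mathcal A_\alpha(\mathbf X))=\|\mathcal A_\alpha(\mathbf X)\|_*$. Furthermore, every such fixed point is a first-order critical point of $\max_{\mathbf X\in\mathrm{St}(d,K)}\mathrm{tr}(\mathbf X^\top\mathbf Q\boldsymbol\Theta^2\mathbf Q^\top\mathbf X\,\mathrm{diag}(a_1,\dots,a_K))$.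
   Context: $\mathrm{St}(d,K)=\{\mathbf X\in\mathbb R^{d\times K}:\mathbf X^\top\mathbf X=\mathbf I_K\}$, viewed as an embedded submanifold of $\mathbb R^{d\times K}$ with the Euclidean metric (critical point = vanishing Riemannian gradient). $\mathcal P_{\mathrm{St}}(\mathbf Y)$ is the set of Frobenius-nearest points of $\mathrm{St}(d,K)$ to $\mathbf Y$. $\|\cdot\|_*$ is the nuclear norm. *)

theory Defs
  imports "HOL-Analysis.Analysis"
begin

text \<open>Matrices in R^{d x K} are rendered as real^'k^'d (rows indexed by 'd, columns by 'k).
  The norm on real^'k^'d is the Frobenius norm.\<close>

definition stiefel :: "(real^'k^'d) set" where
  "stiefel = {X. transpose X ** X = mat 1}"

definition diagm :: "real^'n \<Rightarrow> real^'n^'n" where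
  "diagm v = (\<chi> i j. if i = j then v $ i else 0)"

definition proj_stiefel :: "real^'k^'d \<Rightarrow> (real^'k^'d) set" where
  "proj_stiefel Y = {X \<in> stiefel. \<forall>Z \<in> stiefel. norm (Y - X) \<le> norm (Y - Z)}"

definition nuclear_norm :: "real^'k^'d \<Rightarrow> real" where
  "nuclear_norm Y = trace (THE S :: real^'k^'k. transpose S = S \<and> (\<forall>x. 0 \<le> x \<bullet> (S *v x))
                           \<and> S ** S = transpose Y ** Y)"

text \<open>First-order critical point of f on the Stiefel manifold (embedded, Euclidean metric):
  X is on St and the differential of f at X vanishes on the tangent space
  T_X St = {V. X^T V + V^T X = 0}, i.e. the Riemannian gradient vanishes.\<close>
definition stiefel_critical :: "(real^'k^'d \<Rightarrow> real) \<Rightarrow> real^'k^'d \<Rightarrow> bool" where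
  "stiefel_critical f X \<longleftrightarrow> X \<in> stiefel \<and>
     (\<exists>f'. (f has_derivative f') (at X) \<and>
        (\<forall>V. transpose X ** V + transpose V ** X = 0 \<longrightarrow> f' V = 0))"

end

theory Submission
  imports Defs
begin

definition col :: "real^'k^'d \<Rightarrow> 'k \<Rightarrow> real^'d" where "col X p = (\<chi> r. X$r$p)"
definition mkm :: "('k \<Rightarrow> real^'d) \<Rightarrow> real^'k^'d" where "mkm w = (\<chi> r p. w p $ r)"

lemma col_mkm[simp]: "col (mkm w) p = w p"
  by (simp add: col_def mkm_def vec_eq_iff)
lemma mkm_col[simp]: "mkm (col X) = X"
  by (simp add: col_def mkm_def vec_eq_iff)
lemma col_eqI: "(\<And>p. col X p = col Y p) \<Longrightarrow> X = Y"
  by (metis mkm_col ext)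

lemma inner_mat_col: "inner X Y = (\<Sum>p\<in>UNIV. inner (col X p) (col Y p))"
proof -
  have "inner X Y = (\<Sum>r\<in>UNIV. \<Sum>p\<in>UNIV. X$r$p * Y$r$p)" by (simp add: inner_vec_def)
  also have "\<dots> = (\<Sum>p\<in>UNIV. \<Sum>r\<in>UNIV. X$r$p * Y$r$p)" by (rule sum.swap)
  also have "\<dots> = (\<Sum>p\<in>UNIV. inner (col X p) (col Y p))" by (simp add: inner_vec_def col_def)
  finally show ?thesis .
qed

lemma tXY: "(transpose X ** Y)$p$q = inner (col X p) (col Y q)"
  by (simp add: matrix_matrix_mult_def transpose_def col_def inner_vec_def)

lemma stiefel_col: "X \<in> stiefel \<longleftrightarrow> (\<forall>p q. inner (col X p) (col X q) = (if p=q then 1 else 0))"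
  unfolding stiefel_def by (simp add: vec_eq_iff tXY mat_def)

lemma col_mult: "col (A ** X) p = A *v col X p"
  by (simp add: col_def matrix_matrix_mult_def matrix_vector_mult_def)

lemma inner_trace: "inner X Y = trace (transpose X ** Y)"
  unfolding trace_def tXY by (rule inner_mat_col)

lemma inner_left: fixes M :: "real^'k^'d" shows "inner M (A ** N) = inner (transpose A ** M) N"
proof -
  have "inner M (A ** N) = trace (transpose M ** (A ** N))" by (rule inner_trace)
  also have "\<dots> = trace (transpose (transpose A ** M) ** N)" by (simp add: matrix_transpose_mul matrix_mul_assoc)
  also have "\<dots> = inner (transpose A ** M) N" by (rule inner_trace[symmetric])
  finally show ?thesis .
qed

lemma inner_right: fixes M :: "real^'k^'d" shows "inner M (N ** C) = inner (M ** transpose C) N"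
proof -
  have "inner M (N ** C) = trace (transpose M ** (N ** C))" by (rule inner_trace)
  also have "\<dots> = trace ((transpose M ** N) ** C)" by (simp add: matrix_mul_assoc)
  also have "\<dots> = trace (C ** (transpose M ** N))" by (rule trace_mul_sym)
  also have "\<dots> = trace (transpose (M ** transpose C) ** N)" by (simp add: matrix_transpose_mul matrix_mul_assoc)
  also have "\<dots> = inner (M ** transpose C) N" by (rule inner_trace[symmetric])
  finally show ?thesis .
qed

lemma inner_mv: fixes x :: "real^'d" shows "inner x (A *v y) = inner (transpose A *v x) y"
  by (simp add: dot_lmul_matrix)


lemma quad_lemma:
  fixes B C :: real
  assumes "\<And>t. t*B + t^2*C \<le> 0" shows "B = 0"
proof (rule ccontr)
  assume nz: "B \<noteq> 0"
  define k where "k = \<bar>C\<bar>+1"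
  define t where "t = B/k"
  have pos: "k > 0" "k + C > 0" unfolding k_def by auto
  have "t*B + t^2*C = B^2/k^2 * (k+C)"
    using pos by (simp add: t_def field_simps power2_eq_square)
  moreover have "B^2/k^2 * (k+C) > 0"
    using nz pos by (intro mult_pos_pos divide_pos_pos) auto
  ultimately show False using assms[of t] by linarith
qed

lemma rot_lemma:
  fixes A B :: real
  assumes "\<And>c s. c^2 + s^2 = 1 \<Longrightarrow> (c-1)*A + s*B \<le> 0" shows "B = 0"
proof (rule quad_lemma[where C="-A"])
  fix t :: real
  have d: "1 + t^2 > 0" by (simp add: add_pos_nonneg)
  define c where "c = (1 - t^2)/(1+t^2)"
  define s where "s = 2*t/(1+t^2)"
  have e: "(1 - t^2)^2 + (2*t)^2 = (1+t^2)^2" by algebra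
  have "c^2 + s^2 = ((1 - t^2)^2 + (2*t)^2)/(1+t^2)^2"
    unfolding c_def s_def by (simp add: power_divide add_divide_distrib)
  also have "\<dots> = 1" using d e by simp
  finally have "c^2 + s^2 = 1" .
  hence "(c-1)*A + s*B \<le> 0" by (rule assms)
  moreover have "(c-1)*A + s*B = 2*(t*B + t^2*(-A))/(1+t^2)"
  proof -
    have cm: "c - 1 = -2*t^2/(1+t^2)" using d by (simp add: c_def field_simps)
    define k where "k = 1 + t^2"
    have k: "k \<noteq> 0" using d k_def by simp
    show ?thesis unfolding cm s_def k_def[symmetric] using k by (simp add: field_simps)
  qed
  ultimately have "2*(t*B + t^2*(-A))/(1+t^2) \<le> 0" by simp
  thus "t*B + t^2*(-A) \<le> 0" using d by (simp add: divide_le_0_iff)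
qed


lemma card_lt_UNIV:
  fixes J :: "'k::finite set"
  assumes "j \<notin> J" shows "card J < CARD('k)"
  using assms by (metis UNIV_I finite psubset_card_mono psubsetI subset_UNIV)

lemma exists_orth_unit:
  fixes w :: "'k \<Rightarrow> real^'n"
  assumes "finite J" "card J < CARD('n)"
  obtains x where "norm x = 1" "\<And>p. p \<in> J \<Longrightarrow> inner (w p) x = 0"
proof -
  have "dim (w ` J) \<le> card (w ` J)" using assms(1) by (intro dim_le_card') auto
  also have "\<dots> \<le> card J" using assms(1) by (rule card_image_le)
  finally have "dim (w ` J) < DIM(real^'n)" using assms(2) by simp
  then obtain x0 where x0: "x0 \<noteq> 0" "\<And>y. y \<in> span (w ` J) \<Longrightarrow> orthogonal x0 y"
    by (metis orthogonal_to_subspace_exists)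
  define x where "x = x0 /\<^sub>R norm x0"
  have "norm x = 1" using x0 by (simp add: x_def)
  moreover have "inner (w p) x = 0" if "p \<in> J" for p
  proof -
    have "orthogonal x0 (w p)" using x0(2) that by (simp add: span_base)
    thus ?thesis by (simp add: x_def orthogonal_def inner_commute)
  qed
  ultimately show ?thesis using that by blast
qed

lemma spectral_step:
  fixes A :: "real^'k^'k" and u :: "'k \<Rightarrow> real^'k"
  assumes sym: "transpose A = A" and fin: "finite J" and cJ: "card J < CARD('k)"
    and on: "\<forall>p\<in>J. \<forall>q\<in>J. inner (u p) (u q) = (if p = q then 1 else 0)"
    and ev: "\<forall>p\<in>J. A *v u p = inner (u p) (A *v u p) *\<^sub>R u p"
  obtains v where "norm v = 1" "\<forall>p\<in>J. inner (u p) v = 0" "A *v v = inner v (A *v v) *\<^sub>R v"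
proof -
  have As: "inner x (A *v y) = inner (A *v x) y" for x y
    using inner_mv[of x A y] sym by simp
  define W where "W = sphere (0::real^'k) 1 \<inter> (\<Inter>p\<in>J. {x. inner (u p) x = 0})"
  obtain x0 where x0: "norm x0 = 1" "\<And>p. p \<in> J \<Longrightarrow> inner (u p) x0 = 0"
    using exists_orth_unit[OF fin cJ] by blast
  have "x0 \<in> W" using x0 by (simp add: W_def)
  hence Wne: "W \<noteq> {}" by blast
  have Wc: "compact W" unfolding W_def
    by (intro compact_Int_closed compact_sphere closed_INT ballI closed_hyperplane)
  have cont: "continuous_on W (\<lambda>x. inner x (A *v x))"
    by (intro continuous_on_inner continuous_on_id linear_continuous_on matrix_vector_mul_bounded_linear)
  obtain v where vW: "v \<in> W" and vmax: "\<And>y. y \<in> W \<Longrightarrow> inner y (A *v y) \<le> inner v (A *v v)"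
    using continuous_attains_sup[OF Wc Wne cont] by blast
  have nv: "norm v = 1" and vo: "\<forall>p\<in>J. inner (u p) v = 0" using vW by (auto simp: W_def)
  have vv: "inner v v = 1" using nv by (simp add: dot_square_norm)
  have "A *v v = inner v (A *v v) *\<^sub>R v"
  proof (rule ccontr)
    define r where "r = A *v v - inner v (A *v v) *\<^sub>R v"
    assume "A *v v \<noteq> inner v (A *v v) *\<^sub>R v"
    hence rnz: "r \<noteq> 0" by (simp add: r_def)
    have ru: "inner (u p) r = 0" if "p \<in> J" for p
    proof -
      have "inner (u p) (A *v v) = inner (A *v u p) v" by (rule As)
      also have "\<dots> = inner (u p) (A *v u p) * inner (u p) v"
      proof -
        have e: "A *v u p = inner (u p) (A *v u p) *\<^sub>R u p" using ev that by blast
        show ?thesis by (metis e inner_scaleR_left)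
      qed
      also have "\<dots> = 0" using vo that by simp
      finally show ?thesis using vo that by (simp add: r_def inner_diff_right)
    qed
    have rv: "inner v r = 0" using vv by (simp add: r_def inner_diff_right)
    have rAv: "inner r (A *v v) = inner r r"
    proof -
      have "A *v v = r + inner v (A *v v) *\<^sub>R v" by (simp add: r_def)
      hence "inner r (A *v v) = inner r r + inner v (A *v v) * inner r v"
        by (metis inner_add_right inner_scaleR_right)
      thus ?thesis using rv by (simp add: inner_commute)
    qed
    define w where "w = r /\<^sub>R norm r"
    have nr: "norm r > 0" using rnz by simp
    have ww: "inner w w = 1" using rnz by (simp add: w_def dot_square_norm)
    have wv: "inner w v = 0" using rv by (simp add: w_def inner_commute)
    have wu: "inner (u p) w = 0" if "p \<in> J" for p using ru[OF that] by (simp add: w_def)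
    have wAv: "inner w (A *v v) = norm r"
      using rAv nr by (simp add: w_def dot_square_norm power2_eq_square)
    have "t * (2 * inner w (A *v v)) + t^2 * (inner w (A *v w) - inner v (A *v v)) \<le> 0" for t
    proof -
      define k where "k = 1 + t^2"
      have k: "k > 0" unfolding k_def by (simp add: add_pos_nonneg)
      define y where "y = (1 / sqrt k) *\<^sub>R (v + t *\<^sub>R w)"
      have n2: "inner (v + t *\<^sub>R w) (v + t *\<^sub>R w) = k"
        using vv ww wv by (simp add: k_def inner_add_left inner_add_right inner_commute power2_eq_square)
      have "inner y y = k / (sqrt k)^2" using n2 by (simp add: y_def power2_eq_square)
      hence "inner y y = 1" using k by simp
      hence "norm y = 1" by (simp add: norm_eq_sqrt_inner)
      moreover have "inner (u p) y = 0" if "p \<in> J" for p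
        using wu[OF that] vo that by (simp add: y_def inner_add_right)
      ultimately have "y \<in> W" by (simp add: W_def)
      hence le: "inner y (A *v y) \<le> inner v (A *v v)" by (rule vmax)
      have vAw: "inner v (A *v w) = inner w (A *v v)" using As[of v w] by (simp add: inner_commute)
      have g: "inner (v + t *\<^sub>R w) (A *v (v + t *\<^sub>R w)) =
          inner v (A *v v) + t * (2 * inner w (A *v v)) + t^2 * inner w (A *v w)"
        using vAw by (simp add: matrix_vector_right_distrib matrix_vector_mult_scaleR inner_add_left inner_add_right
            algebra_simps power2_eq_square)
      have "inner y (A *v y) = inner (v + t *\<^sub>R w) (A *v (v + t *\<^sub>R w)) / k"
        using k by (simp add: y_def matrix_vector_mult_scaleR real_sqrt_mult[symmetric])
      hence "inner v (A *v v) + t * (2 * inner w (A *v v)) + t^2 * inner w (A *v w) \<le> k * inner v (A *v v)"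
        using le k g by (simp add: divide_le_eq mult.commute)
      thus ?thesis by (simp add: k_def algebra_simps)
    qed
    hence "2 * inner w (A *v v) = 0" by (rule quad_lemma)
    thus False using wAv nr by simp
  qed
  thus ?thesis using nv vo that by blast
qed

lemma spectral:
  fixes A :: "real^'k^'k"
  assumes sym: "transpose A = A"
  shows "\<exists>u::'k \<Rightarrow> real^'k. (\<forall>p q. inner (u p) (u q) = (if p = q then 1 else 0))
           \<and> (\<forall>p. A *v u p = inner (u p) (A *v u p) *\<^sub>R u p)"
proof -
  have "finite J \<Longrightarrow> \<exists>u::'k \<Rightarrow> real^'k. (\<forall>p\<in>J. \<forall>q\<in>J. inner (u p) (u q) = (if p = q then 1 else 0))
           \<and> (\<forall>p\<in>J. A *v u p = inner (u p) (A *v u p) *\<^sub>R u p)" for J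
  proof (induction J rule: finite_induct)
    case empty thus ?case by simp
  next
    case (insert j J)
    then obtain u where on: "\<forall>p\<in>J. \<forall>q\<in>J. inner (u p) (u q) = (if p = q then 1 else 0)"
      and ev: "\<forall>p\<in>J. A *v u p = inner (u p) (A *v u p) *\<^sub>R u p" by blast
    obtain v where v: "norm v = 1" "\<forall>p\<in>J. inner (u p) v = 0" "A *v v = inner v (A *v v) *\<^sub>R v"
      using spectral_step[OF sym insert(1) card_lt_UNIV[OF insert(2)] on ev] by blast
    have vv: "inner v v = 1" using v(1) by (simp add: dot_square_norm)
    define u' where "u' = u(j := v)"
    have "\<forall>p\<in>insert j J. \<forall>q\<in>insert j J. inner (u' p) (u' q) = (if p = q then 1 else 0)"
      using on v(2) vv insert(2) by (auto simp: u'_def inner_commute)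
    moreover have "\<forall>p\<in>insert j J. A *v u' p = inner (u' p) (A *v u' p) *\<^sub>R u' p"
      using ev v(3) insert(2) by (auto simp: u'_def)
    ultimately show ?case by blast
  qed
  from this[of UNIV] show ?thesis by simp
qed


lemma complete_orthonormal:
  fixes w :: "'k::finite \<Rightarrow> real^'n"
  assumes kn: "CARD('k) \<le> CARD('n)"
    and on: "\<forall>p\<in>P. \<forall>q\<in>P. inner (w p) (w q) = (if p = q then 1 else 0)"
  shows "\<exists>w'. (\<forall>p\<in>P. w' p = w p) \<and> (\<forall>p q. inner (w' p) (w' q) = (if p = q then 1 else 0))"
proof -
  have "finite J \<Longrightarrow> \<exists>w'. (\<forall>p\<in>P. w' p = w p) \<and>
          (\<forall>p\<in>P \<union> J. \<forall>q\<in>P \<union> J. inner (w' p) (w' q) = (if p = q then 1 else 0))" for J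
  proof (induction J rule: finite_induct)
    case empty thus ?case using on by auto
  next
    case (insert j J)
    then obtain w' where ag: "\<forall>p\<in>P. w' p = w p"
      and on': "\<forall>p\<in>P \<union> J. \<forall>q\<in>P \<union> J. inner (w' p) (w' q) = (if p = q then 1 else 0)" by blast
    show ?case
    proof (cases "j \<in> P \<union> J")
      case True
      hence "P \<union> insert j J = P \<union> J" by auto
      show ?thesis by (rule exI[of _ w']) (use ag on' \<open>P \<union> insert j J = P \<union> J\<close> in simp)
    next
      case False
      have cl: "card (P \<union> J) < CARD('n)" using card_lt_UNIV[OF False] kn by linarith
      obtain x where x: "norm x = 1" "\<And>p. p \<in> P \<union> J \<Longrightarrow> inner (w' p) x = 0"
        using exists_orth_unit[OF finite cl, of w'] by blast
      have xx: "inner x x = 1" using x(1) by (simp add: dot_square_norm)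
      define w'' where "w'' = w'(j := x)"
      have "\<forall>p\<in>P. w'' p = w p" using ag False by (auto simp: w''_def)
      moreover have "\<forall>p\<in>P \<union> insert j J. \<forall>q\<in>P \<union> insert j J. inner (w'' p) (w'' q) = (if p = q then 1 else 0)"
        using on' x(2) xx False by (auto simp: w''_def inner_commute)
      ultimately show ?thesis by blast
    qed
  qed
  from this[of UNIV] show ?thesis by simp
qed

lemma diagm_right: "(M ** diagm v)$r$p = M$r$p * v$p"
  by (simp add: diagm_def matrix_matrix_mult_def if_distrib sum.delta' cong: if_cong)

lemma transpose_diagm[simp]: "transpose (diagm v) = diagm v"
  by (simp add: diagm_def transpose_def vec_eq_iff)

lemma diagm_mult: "diagm v ** diagm w = diagm (\<chi> i. v$i * w$i)"
  by (simp add: vec_eq_iff diagm_right) (simp add: diagm_def)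

lemma diagm_mv: "diagm v *v x = (\<chi> i. v$i * x$i)"
proof -
  have h: "(\<Sum>j\<in>UNIV. (if i = j then v$i else 0) * x$j) = v$i * x$i" for i
  proof -
    have "(\<Sum>j\<in>UNIV. (if i = j then v$i else 0) * x$j) = (\<Sum>j\<in>UNIV. if i = j then v$i * x$j else 0)"
      by (rule sum.cong) auto
    thus ?thesis by simp
  qed
  show ?thesis unfolding diagm_def matrix_vector_mult_def vec_eq_iff
    by (auto simp: h[symmetric] intro!: sum.cong)
qed

lemma inner_diagm: "inner x (diagm v *v x) = (\<Sum>i\<in>UNIV. v$i * (x$i)^2)"
  by (simp add: diagm_mv inner_vec_def power2_eq_square mult.commute mult.left_commute)

lemma trace_diagm: "trace (diagm v) = (\<Sum>i\<in>UNIV. v$i)"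
  by (simp add: trace_def diagm_def)

lemma col_diagm: "col (U ** diagm v) p = v$p *\<^sub>R col U p"
  by (simp add: col_def vec_eq_iff diagm_right)


lemma stiefel_tt: "X \<in> stiefel \<Longrightarrow> transpose X ** X = mat 1"
  by (simp add: stiefel_def)

lemma nuclear_facts:
  fixes Y :: "real^'k::finite^'d::finite"
  assumes kd: "CARD('k) \<le> CARD('d)"
  shows "(\<forall>Z\<in>stiefel. inner Z Y \<le> nuclear_norm Y) \<and> (\<exists>Z\<in>stiefel. inner Z Y = nuclear_norm Y)"
proof -
  define B where "B = transpose Y ** Y"
  have Bs: "transpose B = B" by (simp add: B_def matrix_transpose_mul)
  obtain u :: "'k \<Rightarrow> real^'k" where on: "\<forall>p q. inner (u p) (u q) = (if p = q then 1 else 0)"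
    and ev0: "\<forall>p. B *v u p = inner (u p) (B *v u p) *\<^sub>R u p"
    using spectral[OF Bs] by blast
  define U where "U = mkm u"
  define mu where "mu = (\<chi> p. inner (u p) (B *v u p))"
  define sq where "sq = (\<chi> p. sqrt (mu$p))"
  have ev: "B *v u p = mu$p *\<^sub>R u p" for p using ev0 by (simp add: mu_def)
  have colU: "col U p = u p" for p by (simp add: U_def)
  have UtU: "transpose U ** U = mat 1" using on by (simp add: stiefel_tt stiefel_col U_def)
  hence UUt: "U ** transpose U = mat 1" by (simp add: matrix_left_right_inverse)
  have UtU': "transpose U ** (U ** M) = M" for M :: "real^'k^'k"
    by (simp add: matrix_mul_assoc UtU)
  have Yu: "inner (Y *v u p) (Y *v u q) = mu$p * (if p = q then 1 else 0)" for p q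
  proof -
    have "inner (Y *v u p) (Y *v u q) = inner (transpose Y *v (Y *v u p)) (u q)" by (rule inner_mv)
    also have "\<dots> = inner (u q) (B *v u p)" by (simp add: B_def matrix_vector_mul_assoc inner_commute)
    also have "\<dots> = mu$p * (if p = q then 1 else 0)" using on by (simp add: ev)
    finally show ?thesis .
  qed
  have mu_nn: "mu$p \<ge> 0" for p using Yu[of p p] inner_ge_zero[of "Y *v u p"] by simp
  have sq_nn: "sq$p \<ge> 0" for p using mu_nn[of p] by (simp add: sq_def)
  have sqsq: "sq$p * sq$p = mu$p" for p using mu_nn by (simp add: sq_def)
  have nYu: "norm (Y *v u p) = sq$p" for p using Yu[of p p] by (simp add: norm_eq_sqrt_inner sq_def)
  define S0 where "S0 = U ** diagm sq ** transpose U"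
  have BU: "B ** U = U ** diagm mu"
    by (rule col_eqI) (simp only: col_diagm col_mult[of B U] colU ev)
  have Beq: "B = U ** diagm mu ** transpose U"
  proof -
    have "B = B ** (U ** transpose U)" by (simp add: UUt)
    also have "\<dots> = U ** diagm mu ** transpose U" by (simp add: matrix_mul_assoc BU)
    finally show ?thesis .
  qed
  have DD: "diagm sq ** diagm sq = diagm mu"
    by (simp add: diagm_mult sqsq vec_eq_iff)
  have S0sq: "S0 ** S0 = B"
  proof -
    have "S0 ** S0 = U ** (diagm sq ** (transpose U ** U) ** diagm sq) ** transpose U"
      by (simp add: S0_def matrix_mul_assoc)
    also have "\<dots> = B" by (simp add: UtU DD Beq matrix_mul_assoc)
    finally show ?thesis .
  qed
  have S0t: "transpose S0 = S0" by (simp add: S0_def matrix_transpose_mul matrix_mul_assoc)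
  have S0psd: "0 \<le> inner x (S0 *v x)" for x
  proof -
    have "inner x (S0 *v x) = inner (transpose U *v x) (diagm sq *v (transpose U *v x))"
      by (simp add: S0_def matrix_vector_mul_assoc[symmetric] inner_mv[of x U])
    also have "\<dots> \<ge> 0" unfolding inner_diagm by (intro sum_nonneg mult_nonneg_nonneg sq_nn) simp
    finally show ?thesis .
  qed
  have trS0: "trace S0 = (\<Sum>p\<in>UNIV. sq$p)"
  proof -
    have "trace S0 = trace (U ** (diagm sq ** transpose U))" by (simp add: S0_def matrix_mul_assoc)
    also have "\<dots> = trace ((diagm sq ** transpose U) ** U)" by (rule trace_mul_sym)
    also have "\<dots> = trace (diagm sq)" by (simp add: matrix_mul_assoc[symmetric] UtU)
    finally show ?thesis by (simp add: trace_diagm)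
  qed
  have S0U: "S0 ** U = U ** diagm sq"
    by (simp add: S0_def matrix_mul_assoc[symmetric] UtU)
  have uniq: "S = S0" if St: "transpose S = S" and Sp: "\<forall>x. 0 \<le> inner x (S *v x)" and SS: "S ** S = B" for S
  proof -
    have Ss: "inner x (S *v y) = inner (S *v x) y" for x y using inner_mv[of x S y] St by simp
    have Su: "S *v u p = sq$p *\<^sub>R u p" for p
    proof -
      define r where "r = sq$p"
      define w where "w = S *v u p - r *\<^sub>R u p"
      have "S *v (S *v u p) = B *v u p" using SS by (simp add: matrix_vector_mul_assoc)
      hence SSu: "S *v (S *v u p) = (r * r) *\<^sub>R u p" by (simp add: ev r_def sqsq)
      have Sw: "S *v w = - r *\<^sub>R w"
        by (simp add: w_def matrix_vector_right_distrib matrix_vector_mult_scaleR SSu algebra_simps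
            matrix_vector_mult_diff_distrib scaleR_diff_right)
      have "inner w (S *v w) = - r * inner w w" by (simp add: Sw)
      moreover have "inner w (S *v w) \<ge> 0" using Sp by blast
      moreover have "r \<ge> 0" "inner w w \<ge> 0" by (simp_all add: r_def sq_nn)
      ultimately have "r * inner w w = 0" by (metis add.inverse_inverse add_nonneg_nonneg mult_minus_left
            neg_le_0_iff_le order_antisym mult_nonneg_nonneg)
      show ?thesis
      proof (cases "r = 0")
        case False
        hence "inner w w = 0" using \<open>r * inner w w = 0\<close> by simp
        thus ?thesis by (simp add: w_def r_def)
      next
        case True
        have "inner (S *v u p) (S *v u p) = inner (u p) (S *v (S *v u p))" by (simp add: Ss)
        also have "\<dots> = 0" using SSu True by simp
        finally show ?thesis using True by (simp add: r_def)
      qed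
    qed
    have "S ** U = S0 ** U" unfolding S0U by (rule col_eqI) (simp only: col_mult[of S U] colU col_diagm Su)
    hence "S ** U ** transpose U = S0 ** U ** transpose U" by simp
    thus ?thesis by (simp add: matrix_mul_assoc[symmetric] UUt)
  qed
  have nuc: "nuclear_norm Y = (\<Sum>p\<in>UNIV. sq$p)"
  proof -
    have "(THE S :: real^'k^'k. transpose S = S \<and> (\<forall>x. 0 \<le> x \<bullet> (S *v x)) \<and> S ** S = transpose Y ** Y) = S0"
    proof (rule the_equality)
      show "transpose S0 = S0 \<and> (\<forall>x. 0 \<le> x \<bullet> (S0 *v x)) \<and> S0 ** S0 = transpose Y ** Y"
        using S0t S0psd S0sq unfolding B_def by blast
    next
      fix S :: "real^'k^'k"
      assume h: "transpose S = S \<and> (\<forall>x. 0 \<le> x \<bullet> (S *v x)) \<and> S ** S = transpose Y ** Y"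
      show "S = S0" by (rule uniq) (use h in \<open>simp_all add: B_def\<close>)
    qed
    thus ?thesis unfolding nuclear_norm_def using trS0 by simp
  qed
  have innU: "inner Z Y = (\<Sum>p\<in>UNIV. inner (Z *v u p) (Y *v u p))" for Z :: "real^'k^'d"
  proof -
    have "inner (Z ** U) (Y ** U) = inner Z Y"
      by (simp add: inner_right matrix_mul_assoc[symmetric] UUt)
    thus ?thesis by (simp add: inner_mat_col col_mult colU)
  qed
  have part1: "inner Z Y \<le> nuclear_norm Y" if Z: "Z \<in> stiefel" for Z
  proof -
    have nZ: "norm (Z *v u p) = 1" for p
    proof -
      have "inner (Z *v u p) (Z *v u p) = inner (transpose Z *v (Z *v u p)) (u p)" by (rule inner_mv)
      also have "\<dots> = inner ((transpose Z ** Z) *v u p) (u p)" by (simp add: matrix_vector_mul_assoc)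
      also have "\<dots> = 1" using on stiefel_tt[OF Z] by simp
      finally show ?thesis by (simp add: norm_eq_sqrt_inner)
    qed
    have "inner Z Y \<le> (\<Sum>p\<in>UNIV. norm (Z *v u p) * norm (Y *v u p))"
      unfolding innU by (intro sum_mono norm_cauchy_schwarz)
    also have "\<dots> = nuclear_norm Y" by (simp add: nZ nYu nuc)
    finally show ?thesis .
  qed
  define P where "P = {p. mu$p > 0}"
  define w0 where "w0 p = (1 / sq$p) *\<^sub>R (Y *v u p)" for p
  have on0: "\<forall>p\<in>P. \<forall>q\<in>P. inner (w0 p) (w0 q) = (if p = q then 1 else 0)"
  proof (intro ballI)
    fix p q assume "p \<in> P" "q \<in> P"
    hence "mu$p > 0" by (simp add: P_def)
    hence "sq$p * sq$p > 0" using sqsq by simp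
    thus "inner (w0 p) (w0 q) = (if p = q then 1 else 0)"
      using Yu[of p q] sqsq[of p] by (auto simp: w0_def)
  qed
  obtain w' where ag: "\<forall>p\<in>P. w' p = w0 p" and on': "\<forall>p q. inner (w' p) (w' q) = (if p = q then 1 else 0)"
    using complete_orthonormal[OF kd on0] by blast
  define W where "W = mkm w'"
  have WtW: "transpose W ** W = mat 1" using on' by (simp add: stiefel_tt stiefel_col W_def)
  define Z0 where "Z0 = W ** transpose U"
  have Z0s: "Z0 \<in> stiefel"
  proof -
    have "transpose Z0 ** Z0 = U ** (transpose W ** W) ** transpose U"
      by (simp add: Z0_def matrix_transpose_mul matrix_mul_assoc)
    thus ?thesis by (simp add: WtW UUt stiefel_def)
  qed
  have trm: "inner (w' p) (Y *v u p) = sq$p" for p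
  proof (cases "p \<in> P")
    case True
    hence "mu$p > 0" by (simp add: P_def)
    hence "sq$p > 0" by (simp add: sq_def)
    thus ?thesis using ag True Yu[of p p] by (simp add: w0_def flip: sqsq)
  next
    case False
    hence "mu$p = 0" using mu_nn[of p] by (simp add: P_def)
    hence "sq$p = 0" by (simp add: sq_def)
    hence "Y *v u p = 0" using nYu[of p] by simp
    thus ?thesis using \<open>sq$p = 0\<close> by simp
  qed
  have "inner Z0 Y = (\<Sum>p\<in>UNIV. inner (Z0 *v u p) (Y *v u p))" by (rule innU)
  also have "\<dots> = (\<Sum>p\<in>UNIV. sq$p)"
  proof (rule sum.cong)
    fix p
    have "Z0 *v u p = W *v (transpose U *v u p)" by (simp only: Z0_def matrix_vector_mul_assoc)
    also have "transpose U *v u p = transpose U *v col U p" by (simp add: colU)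
    also have "\<dots> = col (transpose U ** U) p" by (simp add: col_mult)
    finally have "Z0 *v u p = W *v col (mat 1) p" by (simp add: UtU)
    also have "\<dots> = col (W ** mat 1) p" by (simp only: col_mult)
    also have "\<dots> = w' p" by (simp add: W_def matrix_mul_rid)
    finally show "inner (Z0 *v u p) (Y *v u p) = sq$p" by (simp add: trm)
  qed simp
  finally have "inner Z0 Y = nuclear_norm Y" by (simp add: nuc)
  with part1 Z0s show ?thesis by blast
qed


lemma proj_iff:
  fixes X Y :: "real^'k::finite^'d::finite"
  assumes X: "X \<in> stiefel"
  shows "X \<in> proj_stiefel Y \<longleftrightarrow> (\<forall>Z\<in>stiefel. inner Z Y \<le> inner X Y)"
proof -
  have n: "inner (Y - Z) (Y - Z) = inner Y Y - 2 * inner Z Y + real CARD('k)" if Z: "Z \<in> stiefel" for Z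
  proof -
    have "inner Z Z = real CARD('k)" using Z by (simp add: inner_trace stiefel_tt trace_I)
    thus ?thesis by (simp add: inner_diff_left inner_diff_right inner_commute)
  qed
  have "norm (Y - X) \<le> norm (Y - Z) \<longleftrightarrow> inner Z Y \<le> inner X Y" if Z: "Z \<in> stiefel" for Z
    unfolding norm_le n[OF X] n[OF Z] by linarith
  thus ?thesis using X unfolding proj_stiefel_def by auto
qed

lemma sum_two:
  fixes g :: "'k::finite \<Rightarrow> real"
  assumes "i \<noteq> j" "\<And>p. p \<noteq> i \<Longrightarrow> p \<noteq> j \<Longrightarrow> g p = 0"
  shows "sum g UNIV = g i + g j"
proof -
  have "sum g UNIV = sum g {i, j}" using assms(2) by (intro sum.mono_neutral_right) auto
  thus ?thesis using assms(1) by simp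
qed

lemma sum_one:
  fixes g :: "'k::finite \<Rightarrow> real"
  assumes "\<And>p. p \<noteq> j \<Longrightarrow> g p = 0"
  shows "sum g UNIV = g j"
proof -
  have "sum g UNIV = sum g {j}" using assms by (intro sum.mono_neutral_right) auto
  thus ?thesis by simp
qed

lemma max_crit:
  fixes X M :: "real^'k::finite^'d::finite"
  assumes X: "X \<in> stiefel" and mx: "\<forall>Z\<in>stiefel. inner Z M \<le> inner X M"
  shows "\<forall>V. transpose X ** V + transpose V ** X = 0 \<longrightarrow> inner V M = 0"
proof -
  define x where "x = col X"
  define m where "m = col M"
  have on: "inner (x p) (x q) = (if p = q then 1 else 0)" for p q
    using X by (simp add: stiefel_col x_def)
  have sumZ: "inner (mkm z) M = (\<Sum>p\<in>UNIV. inner (z p) (m p))" for z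
    by (simp add: inner_mat_col m_def)
  have sumX: "inner X M = (\<Sum>p\<in>UNIV. inner (x p) (m p))"
    by (simp add: inner_mat_col m_def x_def)
  have test: "(\<Sum>p\<in>UNIV. inner (z p) (m p) - inner (x p) (m p)) \<le> 0"
    if "\<forall>p q. inner (z p) (z q) = (if p = q then 1 else 0)" for z
  proof -
    have "mkm z \<in> stiefel" using that by (simp add: stiefel_col)
    hence "inner (mkm z) M \<le> inner X M" using mx by blast
    thus ?thesis unfolding sumZ sumX by (simp add: sum_subtractf)
  qed
  have symm: "inner (x i) (m j) = inner (x j) (m i)" for i j
  proof (cases "i = j")
    case False
    have "inner (x j) (m i) - inner (x i) (m j) = 0"
    proof (rule rot_lemma[where A = "inner (x i) (m i) + inner (x j) (m j)"])
      fix c s :: real assume cs: "c^2 + s^2 = 1"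
      define z where "z p = (if p = i then c *\<^sub>R x i + s *\<^sub>R x j else if p = j then (-s) *\<^sub>R x i + c *\<^sub>R x j else x p)" for p
      have cs': "c * c + s * s = 1" using cs by (simp add: power2_eq_square)
      have "\<forall>p q. inner (z p) (z q) = (if p = q then 1 else 0)"
        using False cs' by (auto simp: z_def on inner_add_left inner_add_right algebra_simps)
      hence "(\<Sum>p\<in>UNIV. inner (z p) (m p) - inner (x p) (m p)) \<le> 0" by (rule test)
      moreover have "(\<Sum>p\<in>UNIV. inner (z p) (m p) - inner (x p) (m p)) =
          (c - 1) * (inner (x i) (m i) + inner (x j) (m j)) + s * (inner (x j) (m i) - inner (x i) (m j))"
        by (subst sum_two[OF False]) (auto simp: z_def False False[symmetric] inner_add_left algebra_simps)
      ultimately show "(c - 1) * (inner (x i) (m i) + inner (x j) (m j)) + s * (inner (x j) (m i) - inner (x i) (m j)) \<le> 0"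
        by simp
    qed
    thus ?thesis by simp
  qed simp
  have span: "m j = (\<Sum>p\<in>UNIV. inner (x p) (m j) *\<^sub>R x p)" for j
  proof (rule ccontr)
    define r where "r = m j - (\<Sum>p\<in>UNIV. inner (x p) (m j) *\<^sub>R x p)"
    assume "m j \<noteq> (\<Sum>p\<in>UNIV. inner (x p) (m j) *\<^sub>R x p)"
    hence rnz: "r \<noteq> 0" by (simp add: r_def)
    have xs: "inner (x q) (\<Sum>p\<in>UNIV. inner (x p) (m j) *\<^sub>R x p) = inner (x q) (m j)" for q
    proof -
      have "inner (x q) (\<Sum>p\<in>UNIV. inner (x p) (m j) *\<^sub>R x p) = (\<Sum>p\<in>UNIV. inner (x p) (m j) * inner (x q) (x p))"
        by (simp add: inner_sum_right)
      also have "\<dots> = (\<Sum>p\<in>UNIV. if p = q then inner (x q) (m j) else 0)"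
        by (rule sum.cong) (auto simp: on)
      finally show ?thesis by simp
    qed
    have xr: "inner (x q) r = 0" for q by (simp add: r_def inner_diff_right xs)
    have rm: "inner r (m j) = inner r r"
    proof -
      have "inner r (\<Sum>p\<in>UNIV. inner (x p) (m j) *\<^sub>R x p) = 0"
        using xr by (simp add: inner_sum_right inner_commute)
      hence "inner r r = inner r (m j)" by (simp add: r_def inner_diff_right)
      thus ?thesis by simp
    qed
    define u where "u = r /\<^sub>R norm r"
    have nr: "norm r > 0" using rnz by simp
    have uu: "inner u u = 1" using rnz by (simp add: u_def dot_square_norm)
    have xu: "inner (x q) u = 0" for q using xr[of q] by (simp add: u_def)
    have um: "inner u (m j) = norm r" using rm nr by (simp add: u_def dot_square_norm power2_eq_square)
    have "inner u (m j) = 0"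
    proof (rule rot_lemma[where A = "inner (x j) (m j)"])
      fix c s :: real assume cs: "c^2 + s^2 = 1"
      define z where "z p = (if p = j then c *\<^sub>R x j + s *\<^sub>R u else x p)" for p
      have cs': "c * c + s * s = 1" using cs by (simp add: power2_eq_square)
      have ux: "inner u (x q) = 0" for q using xu[of q] by (simp add: inner_commute)
      have "\<forall>p q. inner (z p) (z q) = (if p = q then 1 else 0)"
        using cs' uu by (auto simp: z_def on inner_add_left inner_add_right xu ux algebra_simps)
      hence "(\<Sum>p\<in>UNIV. inner (z p) (m p) - inner (x p) (m p)) \<le> 0" by (rule test)
      moreover have "(\<Sum>p\<in>UNIV. inner (z p) (m p) - inner (x p) (m p)) =
          (c - 1) * inner (x j) (m j) + s * inner u (m j)"
        by (subst sum_one[where j=j]) (auto simp: z_def inner_add_left algebra_simps)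
      ultimately show "(c - 1) * inner (x j) (m j) + s * inner u (m j) \<le> 0" by simp
    qed
    thus False using um nr by simp
  qed
  show ?thesis
  proof (intro allI impI)
    fix V :: "real^'k^'d"
    assume tg: "transpose X ** V + transpose V ** X = 0"
    define v where "v = col V"
    define a where "a p q = inner (x p) (m q)" for p q
    define Om where "Om p q = inner (v p) (x q)" for p q
    have Oms: "Om p q = - Om q p" for p q
    proof -
      have "(transpose X ** V + transpose V ** X)$q$p = 0" using tg by simp
      hence "inner (x q) (v p) + inner (v q) (x p) = 0" by (simp add: tXY x_def v_def)
      thus ?thesis by (simp add: Om_def inner_commute)
    qed
    have as: "a p q = a q p" for p q by (simp add: a_def symm)
    have "inner V M = (\<Sum>j\<in>UNIV. inner (v j) (m j))" by (simp add: inner_mat_col v_def m_def)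
    also have "\<dots> = (\<Sum>j\<in>UNIV. \<Sum>p\<in>UNIV. a p j * Om j p)"
    proof (rule sum.cong)
      fix j
      have "inner (v j) (m j) = inner (v j) (\<Sum>p\<in>UNIV. inner (x p) (m j) *\<^sub>R x p)" using span[of j] by simp
      thus "inner (v j) (m j) = (\<Sum>p\<in>UNIV. a p j * Om j p)"
        by (simp add: inner_sum_right a_def Om_def)
    qed simp
    finally have T: "inner V M = (\<Sum>j\<in>UNIV. \<Sum>p\<in>UNIV. a p j * Om j p)" .
    have "(\<Sum>j\<in>UNIV. \<Sum>p\<in>UNIV. a p j * Om j p) = (\<Sum>p\<in>UNIV. \<Sum>j\<in>UNIV. a p j * Om j p)"
      by (rule sum.swap)
    also have "\<dots> = (\<Sum>p\<in>UNIV. \<Sum>j\<in>UNIV. - (a j p * Om p j))"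
      by (intro sum.cong refl) (metis as Oms mult_minus_right)
    also have "\<dots> = - (\<Sum>j\<in>UNIV. \<Sum>p\<in>UNIV. a p j * Om j p)"
      by (simp add: sum_negf)
    finally have "(\<Sum>j\<in>UNIV. \<Sum>p\<in>UNIV. a p j * Om j p) = 0" by simp
    thus "inner V M = 0" using T by simp
  qed
qed


lemma mat_scaleR_right: "(A::real^'n^'m) ** (c *\<^sub>R B) = c *\<^sub>R (A ** B)"
  by (simp add: matrix_matrix_mult_def vec_eq_iff sum_distrib_left algebra_simps)

lemma mat_scaleR_left: "(c *\<^sub>R (A::real^'n^'m)) ** B = c *\<^sub>R (A ** B)"
  by (simp add: matrix_matrix_mult_def vec_eq_iff sum_distrib_left algebra_simps)

lemma mat_add_rdistrib: "((A::real^'n^'m) + B) ** C = A ** C + B ** C"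
  by (simp add: matrix_matrix_mult_def vec_eq_iff sum.distrib algebra_simps)

lemma crit_lemma:
  fixes X :: "real^'k::finite^'d::finite" and Bm :: "real^'d^'d" and D :: "real^'k^'k"
  assumes X: "X \<in> stiefel" and Bs: "transpose Bm = Bm" and Ds: "transpose D = D"
    and tang: "\<forall>V. transpose X ** V + transpose V ** X = 0 \<longrightarrow> inner V (\<alpha> *\<^sub>R X + Bm ** X ** D) = 0"
  shows "stiefel_critical (\<lambda>Y. inner Y (Bm ** Y ** D)) X"
proof -
  define L where "L Y = Bm ** Y ** D" for Y :: "real^'k^'d"
  have lin: "linear L"
    by (rule linearI) (simp_all add: L_def matrix_add_ldistrib mat_add_rdistrib mat_scaleR_right mat_scaleR_left)
  hence bl: "bounded_linear L" using linear_conv_bounded_linear by blast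
  have der: "((\<lambda>Y. inner Y (L Y)) has_derivative (\<lambda>h. inner X (L h) + inner h (L X))) (at X)"
  proof -
    have d1: "((\<lambda>Y. Y) has_derivative (\<lambda>h. h)) (at X)" by (rule has_derivative_ident)
    have d2: "(L has_derivative L) (at X)" using bounded_linear.has_derivative[OF bl has_derivative_ident] by simp
    show ?thesis using has_derivative_inner[OF d1 d2] by simp
  qed
  have symm: "inner X (L h) = inner h (L X)" for h
  proof -
    have "inner X (L h) = inner (X ** transpose D) (Bm ** h)" by (simp add: L_def inner_right)
    also have "\<dots> = inner (transpose Bm ** (X ** transpose D)) h" by (rule inner_left)
    also have "\<dots> = inner h (L X)" by (simp add: L_def Bs Ds matrix_mul_assoc inner_commute)
    finally show ?thesis .
  qed
  have "\<forall>V. transpose X ** V + transpose V ** X = 0 \<longrightarrow> inner X (L V) + inner V (L X) = 0"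
  proof (intro allI impI)
    fix V :: "real^'k^'d"
    assume tg: "transpose X ** V + transpose V ** X = 0"
    have "trace (transpose X ** V) + trace (transpose V ** X) = 0"
    proof -
      have "trace (transpose X ** V + transpose V ** X) = 0" using tg by (simp add: trace_def)
      thus ?thesis by (simp only: trace_add)
    qed
    hence "inner X V + inner V X = 0" by (simp add: inner_trace)
    hence VX: "inner V X = 0" by (simp add: inner_commute)
    have "inner V (\<alpha> *\<^sub>R X + L X) = 0" using tang tg by (simp add: L_def)
    hence "inner V (L X) = 0" using VX by (simp add: inner_add_right)
    thus "inner X (L V) + inner V (L X) = 0" by (simp add: symm)
  qed
  with der X show ?thesis unfolding stiefel_critical_def L_def by blast
qed


theorem lemma7:
  fixes Q :: "real^('k::{finite,linorder})^('d::finite)"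
    and lam a :: "real^('k::{finite,linorder})" and \<alpha> :: real and X :: "real^('k::{finite,linorder})^('d::finite)"
    and \<Theta> :: "real^('k::{finite,linorder})^('k::{finite,linorder})"
    and \<A> :: "real^('k::{finite,linorder})^('d::finite) \<Rightarrow> real^('k::{finite,linorder})^('d::finite)"
  assumes dK: "CARD('k) < CARD('d)"
    and Q: "Q \<in> stiefel"
    and lam_dec: "\<forall>i j. i < j \<longrightarrow> lam $ j < lam $ i"
    and lam_pos: "\<forall>i. 0 < lam $ i"
    and a_dec: "\<forall>i j. i < j \<longrightarrow> a $ j < a $ i"
    and a_pos: "\<forall>i. 0 < a $ i"
    and alpha: "0 < \<alpha>"
    and X: "X \<in> stiefel"
    and Theta: "\<Theta> = diagm (\<chi> i. sqrt (lam $ i))"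
    and A: "\<A> = (\<lambda>Y. \<alpha> *\<^sub>R Y + Q ** \<Theta> ** \<Theta> ** transpose Q ** Y ** diagm a)"
  shows "(X \<in> proj_stiefel (\<A> X) \<longleftrightarrow> trace (transpose X ** \<A> X) = nuclear_norm (\<A> X))
       \<and> (X \<in> proj_stiefel (\<A> X) \<longrightarrow>
            stiefel_critical (\<lambda>Y. trace (transpose Y ** Q ** \<Theta> ** \<Theta> ** transpose Q ** Y ** diagm a)) X)"
proof -
  have kd: "CARD('k) \<le> CARD('d)" using dK by simp
  have nf: "(\<forall>Z\<in>stiefel. inner Z (\<A> X) \<le> nuclear_norm (\<A> X)) \<and> (\<exists>Z\<in>stiefel. inner Z (\<A> X) = nuclear_norm (\<A> X))"
    by (rule nuclear_facts[OF kd])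
  have tr: "trace (transpose X ** \<A> X) = inner X (\<A> X)" by (simp add: inner_trace)
  have P1: "X \<in> proj_stiefel (\<A> X) \<longleftrightarrow> inner X (\<A> X) = nuclear_norm (\<A> X)"
    unfolding proj_iff[OF X] using nf X by (metis order_antisym order.refl)
  define Bm where "Bm = Q ** \<Theta> ** \<Theta> ** transpose Q"
  have Bs: "transpose Bm = Bm" by (simp add: Bm_def Theta matrix_transpose_mul matrix_mul_assoc)
  have Dsym: "transpose (diagm a) = diagm a" by simp
  have AX: "\<A> Y = \<alpha> *\<^sub>R Y + Bm ** Y ** diagm a" for Y by (simp add: A Bm_def)
  have f: "(\<lambda>Y. trace (transpose Y ** Q ** \<Theta> ** \<Theta> ** transpose Q ** Y ** diagm a)) = (\<lambda>Y. inner Y (Bm ** Y ** diagm a))"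
    by (simp add: inner_trace Bm_def matrix_mul_assoc)
  have P2: "stiefel_critical (\<lambda>Y. trace (transpose Y ** Q ** \<Theta> ** \<Theta> ** transpose Q ** Y ** diagm a)) X"
    if h: "X \<in> proj_stiefel (\<A> X)"
  proof -
    have mx: "\<forall>Z\<in>stiefel. inner Z (\<A> X) \<le> inner X (\<A> X)" using h proj_iff[OF X] by blast
    have "\<forall>V. transpose X ** V + transpose V ** X = 0 \<longrightarrow> inner V (\<alpha> *\<^sub>R X + Bm ** X ** diagm a) = 0"
      using max_crit[OF X mx] by (simp add: AX)
    from crit_lemma[OF X Bs Dsym this] show ?thesis unfolding f .
  qed
  show ?thesis using P1 P2 tr by simp
qed

end
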